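(* Let $(X,\le)$ be a globally hyperbolic poset. A formal interval is a map $x:\{1,2\}\to X$ with $x(1)\le x(2)$. The set of formal intervals, ordered by $x\sqsubseteq y$ iff $x(1)\le y(1)$ and $y(2)\le x(2)$, is a domain (continuous dcpo) order-isomorphic to $\mathbf{I}X$, the set $\{[a,b]: a\le b\}$ of closed intervals $[a,b]=\{z: a\le z\le b\}$ of $X$ ordered by reverse inclusion.
   Context: For a poset $(P,\sqsubseteq)$: a nonempty $S\subseteq P$ is directed if any two elements have an upper bound in $S$, filtered if any two have a lower bound in $S$; $\bigsqcup S$, $\bigwedge S$ denote supremum/infimum. $x\ll y$ iff for every directed $S$ with a supremum, $y\sqsubseteq\bigsqcup S$ implies $x\sqsubseteq s$ for some $s\in S$. $\Downarrow x=\{a:a\ll x\}$, $\Uparrow x=\{a:x\ll a\}$. $P$ is continuous if it has a subset $B$ such that for every $x$, $B\cap\Downarrow x$ contains a directed set with supremum $x$. A domain is a continuous poset in which every directed set has a supremum. A continuous poset is bicontinuous if (1) $x\ll y$ iff for every filtered $S$ having an infimum, $\bigwedge S\sqsubseteq x$ implies $s\sqsubseteq y$ for some $s\in S$; and (2) each $\Uparrow x$ is filtered with infimum $x$. The interval topology of a bicontinuous poset has basis the sets $\{z: a\ll z\ll b\}$. A globally hyperbolic poset is a bicontinuous poset in which every closed interval $[a,b]$ is compact in the interval topology. *)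

theory Defs
  imports "HOL-Analysis.Analysis"
begin

definition partial_order_on' :: "'a set \<Rightarrow> ('a \<Rightarrow> 'a \<Rightarrow> bool) \<Rightarrow> bool" where
  "partial_order_on' S le \<longleftrightarrow>
     (\<forall>x\<in>S. le x x) \<and>
     (\<forall>x\<in>S. \<forall>y\<in>S. le x y \<and> le y x \<longrightarrow> x = y) \<and>
     (\<forall>x\<in>S. \<forall>y\<in>S. \<forall>z\<in>S. le x y \<and> le y z \<longrightarrow> le x z)"

definition directed_in :: "'a set \<Rightarrow> ('a \<Rightarrow> 'a \<Rightarrow> bool) \<Rightarrow> 'a set \<Rightarrow> bool" where
  "directed_in S le D \<longleftrightarrow> D \<subseteq> S \<and> D \<noteq> {} \<and>
     (\<forall>x\<in>D. \<forall>y\<in>D. \<exists>z\<in>D. le x z \<and> le y z)"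

definition filtered_in :: "'a set \<Rightarrow> ('a \<Rightarrow> 'a \<Rightarrow> bool) \<Rightarrow> 'a set \<Rightarrow> bool" where
  "filtered_in S le F \<longleftrightarrow> F \<subseteq> S \<and> F \<noteq> {} \<and>
     (\<forall>x\<in>F. \<forall>y\<in>F. \<exists>z\<in>F. le z x \<and> le z y)"

definition is_sup_in :: "'a set \<Rightarrow> ('a \<Rightarrow> 'a \<Rightarrow> bool) \<Rightarrow> 'a set \<Rightarrow> 'a \<Rightarrow> bool" where
  "is_sup_in S le D s \<longleftrightarrow> s \<in> S \<and> (\<forall>d\<in>D. le d s) \<and>
     (\<forall>u\<in>S. (\<forall>d\<in>D. le d u) \<longrightarrow> le s u)"

definition is_inf_in :: "'a set \<Rightarrow> ('a \<Rightarrow> 'a \<Rightarrow> bool) \<Rightarrow> 'a set \<Rightarrow> 'a \<Rightarrow> bool" where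
  "is_inf_in S le F s \<longleftrightarrow> s \<in> S \<and> (\<forall>d\<in>F. le s d) \<and>
     (\<forall>u\<in>S. (\<forall>d\<in>F. le u d) \<longrightarrow> le u s)"

definition way_below :: "'a set \<Rightarrow> ('a \<Rightarrow> 'a \<Rightarrow> bool) \<Rightarrow> 'a \<Rightarrow> 'a \<Rightarrow> bool" where
  "way_below S le x y \<longleftrightarrow>
     (\<forall>D s. directed_in S le D \<and> is_sup_in S le D s \<and> le y s \<longrightarrow> (\<exists>d\<in>D. le x d))"

definition way_below_set :: "'a set \<Rightarrow> ('a \<Rightarrow> 'a \<Rightarrow> bool) \<Rightarrow> 'a \<Rightarrow> 'a set" where
  "way_below_set S le x = {a\<in>S. way_below S le a x}"

definition way_above_set :: "'a set \<Rightarrow> ('a \<Rightarrow> 'a \<Rightarrow> bool) \<Rightarrow> 'a \<Rightarrow> 'a set" where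
  "way_above_set S le x = {a\<in>S. way_below S le x a}"

definition continuous_poset :: "'a set \<Rightarrow> ('a \<Rightarrow> 'a \<Rightarrow> bool) \<Rightarrow> bool" where
  "continuous_poset S le \<longleftrightarrow> partial_order_on' S le \<and>
     (\<exists>B\<subseteq>S. \<forall>x\<in>S. \<exists>D. D \<subseteq> B \<inter> way_below_set S le x \<and>
         directed_in S le D \<and> is_sup_in S le D x)"

definition domain_poset :: "'a set \<Rightarrow> ('a \<Rightarrow> 'a \<Rightarrow> bool) \<Rightarrow> bool" where
  "domain_poset S le \<longleftrightarrow> continuous_poset S le \<and>
     (\<forall>D. directed_in S le D \<longrightarrow> (\<exists>s. is_sup_in S le D s))"

definition bicontinuous_poset :: "'a set \<Rightarrow> ('a \<Rightarrow> 'a \<Rightarrow> bool) \<Rightarrow> bool" where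
  "bicontinuous_poset S le \<longleftrightarrow> continuous_poset S le \<and>
     (\<forall>x\<in>S. \<forall>y\<in>S. way_below S le x y \<longleftrightarrow>
        (\<forall>F i. filtered_in S le F \<and> is_inf_in S le F i \<and> le i x \<longrightarrow> (\<exists>s\<in>F. le s y))) \<and>
     (\<forall>x\<in>S. filtered_in S le (way_above_set S le x) \<and> is_inf_in S le (way_above_set S le x) x)"

definition interval_topology :: "'a set \<Rightarrow> ('a \<Rightarrow> 'a \<Rightarrow> bool) \<Rightarrow> 'a topology" where
  "interval_topology S le = topology_generated_by
     {{z\<in>S. way_below S le a z \<and> way_below S le z b} | a b. a \<in> S \<and> b \<in> S}"

definition closed_interval :: "'a set \<Rightarrow> ('a \<Rightarrow> 'a \<Rightarrow> bool) \<Rightarrow> 'a \<Rightarrow> 'a \<Rightarrow> 'a set" where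
  "closed_interval S le a b = {z\<in>S. le a z \<and> le z b}"

definition globally_hyperbolic :: "'a set \<Rightarrow> ('a \<Rightarrow> 'a \<Rightarrow> bool) \<Rightarrow> bool" where
  "globally_hyperbolic S le \<longleftrightarrow> bicontinuous_poset S le \<and>
     (\<forall>a\<in>S. \<forall>b\<in>S. compactin (interval_topology S le) (closed_interval S le a b))"

text \<open>Formal intervals: maps {1,2} \<rightarrow> X with x(1) \<le> x(2), represented as pairs (x(1), x(2)).\<close>
definition formal_intervals :: "'a set \<Rightarrow> ('a \<Rightarrow> 'a \<Rightarrow> bool) \<Rightarrow> ('a \<times> 'a) set" where
  "formal_intervals X le = {(a, b). a \<in> X \<and> b \<in> X \<and> le a b}"

definition formal_le :: "('a \<Rightarrow> 'a \<Rightarrow> bool) \<Rightarrow> 'a \<times> 'a \<Rightarrow> 'a \<times> 'a \<Rightarrow> bool" where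
  "formal_le le x y \<longleftrightarrow> le (fst x) (fst y) \<and> le (snd y) (snd x)"

definition interval_domain :: "'a set \<Rightarrow> ('a \<Rightarrow> 'a \<Rightarrow> bool) \<Rightarrow> 'a set set" where
  "interval_domain X le = {closed_interval X le a b | a b. a \<in> X \<and> b \<in> X \<and> le a b}"

definition order_isomorphic ::
  "'a set \<Rightarrow> ('a \<Rightarrow> 'a \<Rightarrow> bool) \<Rightarrow> 'b set \<Rightarrow> ('b \<Rightarrow> 'b \<Rightarrow> bool) \<Rightarrow> bool" where
  "order_isomorphic S le T le' \<longleftrightarrow>
     (\<exists>f. bij_betw f S T \<and> (\<forall>x\<in>S. \<forall>y\<in>S. le x y \<longleftrightarrow> le' (f x) (f y)))"

end

theory Submission
  imports Defs
begin

context
  fixes X :: "'a set" and le :: "'a \<Rightarrow> 'a \<Rightarrow> bool"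
  assumes gh: "globally_hyperbolic X le"
begin

lemma bp: "bicontinuous_poset X le"
  using gh unfolding globally_hyperbolic_def by (rule conjunct1)

lemma comp0: "\<forall>a\<in>X. \<forall>b\<in>X. compactin (interval_topology X le) (closed_interval X le a b)"
  using gh unfolding globally_hyperbolic_def by (rule conjunct2)

lemma cp: "continuous_poset X le"
  using bp unfolding bicontinuous_poset_def by (rule conjunct1)

lemma po: "partial_order_on' X le"
  using cp unfolding continuous_poset_def by (rule conjunct1)

lemma refl: "x \<in> X \<Longrightarrow> le x x"
  using po[unfolded partial_order_on'_def, THEN conjunct1] by blast

lemma antisym: "x \<in> X \<Longrightarrow> y \<in> X \<Longrightarrow> le x y \<Longrightarrow> le y x \<Longrightarrow> x = y"
  using po[unfolded partial_order_on'_def, THEN conjunct2, THEN conjunct1] by blast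

lemma trans: "x \<in> X \<Longrightarrow> y \<in> X \<Longrightarrow> z \<in> X \<Longrightarrow> le x y \<Longrightarrow> le y z \<Longrightarrow> le x z"
  using po[unfolded partial_order_on'_def, THEN conjunct2, THEN conjunct2] by blast

lemma cont: "x \<in> X \<Longrightarrow> \<exists>D. D \<subseteq> way_below_set X le x \<and> directed_in X le D \<and> is_sup_in X le D x"
proof -
  assume x: "x \<in> X"
  obtain B where "B \<subseteq> X" "\<forall>x\<in>X. \<exists>D. D \<subseteq> B \<inter> way_below_set X le x \<and> directed_in X le D \<and> is_sup_in X le D x"
    using cp[unfolded continuous_poset_def, THEN conjunct2] by (elim exE conjE)
  then obtain D where "D \<subseteq> B \<inter> way_below_set X le x" "directed_in X le D" "is_sup_in X le D x"
    using x by (elim ballE exE conjE) auto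
  then show ?thesis by (intro exI[of _ D]) auto
qed

lemma bic1: "x \<in> X \<Longrightarrow> y \<in> X \<Longrightarrow> way_below X le x y \<Longrightarrow>
   filtered_in X le F \<Longrightarrow> is_inf_in X le F i \<Longrightarrow> le i x \<Longrightarrow> \<exists>s\<in>F. le s y"
proof -
  assume a: "x \<in> X" "y \<in> X" "way_below X le x y" "filtered_in X le F" "is_inf_in X le F i" "le i x"
  have "\<forall>x\<in>X. \<forall>y\<in>X. way_below X le x y \<longleftrightarrow>
        (\<forall>F i. filtered_in X le F \<and> is_inf_in X le F i \<and> le i x \<longrightarrow> (\<exists>s\<in>F. le s y))"
    using bp[unfolded bicontinuous_poset_def, THEN conjunct2, THEN conjunct1] .
  then have "\<forall>F i. filtered_in X le F \<and> is_inf_in X le F i \<and> le i x \<longrightarrow> (\<exists>s\<in>F. le s y)"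
    using a(1,2,3) by blast
  then show ?thesis using a(4,5,6) by blast
qed

lemma bic2: "x \<in> X \<Longrightarrow> filtered_in X le (way_above_set X le x) \<and> is_inf_in X le (way_above_set X le x) x"
  using bp[unfolded bicontinuous_poset_def, THEN conjunct2, THEN conjunct2] by blast

lemma comp: "a \<in> X \<Longrightarrow> b \<in> X \<Longrightarrow> compactin (interval_topology X le) (closed_interval X le a b)"
  using comp0 by blast

lemma wb_le: assumes "x \<in> X" "y \<in> X" "way_below X le x y" shows "le x y"
proof -
  have "directed_in X le {y}" using assms refl unfolding directed_in_def by auto
  moreover have "is_sup_in X le {y} y" using assms refl unfolding is_sup_in_def by auto
  ultimately show ?thesis using assms(3) refl[OF assms(2)] unfolding way_below_def by blast
qed

lemma wb_mono: assumes "c \<in> X" "s \<in> X" "way_below X le x c" "le c s" shows "way_below X le x s"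
  unfolding way_below_def
proof (intro allI impI)
  fix D s' assume h: "directed_in X le D \<and> is_sup_in X le D s' \<and> le s s'"
  then have "s' \<in> X" unfolding is_sup_in_def by blast
  then have "le c s'" using trans[OF assms(1,2)] h assms(4) by blast
  then show "\<exists>d\<in>D. le x d" using h assms(3) unfolding way_below_def by blast
qed

lemma down_nonempty: "z \<in> X \<Longrightarrow> \<exists>a. a \<in> way_below_set X le z"
  using cont unfolding directed_in_def by blast

lemma up_nonempty: "z \<in> X \<Longrightarrow> \<exists>a. a \<in> way_above_set X le z"
  using bic2 unfolding filtered_in_def by blast

lemma down_directed: assumes "x \<in> X" shows "directed_in X le (way_below_set X le x)"
proof -
  obtain D where D: "D \<subseteq> way_below_set X le x" "directed_in X le D" "is_sup_in X le D x"
    using cont[OF assms] by blast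
  have ex: "\<exists>e\<in>D. le a e" if "a \<in> way_below_set X le x" for a
    using that D refl[OF assms] unfolding way_below_set_def way_below_def by blast
  have DX: "D \<subseteq> X" using D unfolding directed_in_def by blast
  have "\<exists>z\<in>way_below_set X le x. le a1 z \<and> le a2 z"
    if a12: "a1 \<in> way_below_set X le x" "a2 \<in> way_below_set X le x" for a1 a2
  proof -
    obtain e1 where e1: "e1 \<in> D" "le a1 e1" using ex a12(1) by blast
    obtain e2 where e2: "e2 \<in> D" "le a2 e2" using ex a12(2) by blast
    obtain e where e: "e \<in> D" "le e1 e" "le e2 e" using D(2) e1 e2 unfolding directed_in_def by blast
    have X: "a1 \<in> X" "a2 \<in> X" "e1 \<in> X" "e2 \<in> X" "e \<in> X" using a12 e e1 e2 DX unfolding way_below_set_def by auto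
    have "le a1 e" using trans[OF X(1,3,5)] e1 e by blast
    moreover have "le a2 e" using trans[OF X(2,4,5)] e2 e by blast
    ultimately show ?thesis using e D(1) by blast
  qed
  then show ?thesis using down_nonempty[OF assms] unfolding directed_in_def way_below_set_def by blast
qed

lemma dir_finite:
  fixes R :: "'a \<Rightarrow> 'a \<Rightarrow> bool"
  assumes "directed_in X R A" "\<And>x y z. x \<in> X \<Longrightarrow> y \<in> X \<Longrightarrow> z \<in> X \<Longrightarrow> R x y \<Longrightarrow> R y z \<Longrightarrow> R x z"
  shows "finite F \<Longrightarrow> F \<subseteq> A \<Longrightarrow> \<exists>y\<in>A. \<forall>x\<in>F. R x y"
proof (induction F rule: finite_induct)
  case empty then show ?case using assms(1) unfolding directed_in_def by auto
next
  case (insert x F)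
  then obtain y where y: "y \<in> A" "\<forall>x\<in>F. R x y" by auto
  obtain z where z: "z \<in> A" "R x z" "R y z" using assms(1) y insert.prems unfolding directed_in_def by blast
  have AX: "A \<subseteq> X" using assms(1) unfolding directed_in_def by blast
  show ?case using z y AX insert.prems assms(2) by (metis insert_iff subset_iff)
qed

lemma cluster:
  fixes R :: "'a \<Rightarrow> 'a \<Rightarrow> bool"
  assumes cp: "compactin (interval_topology X le) K"
    and KX: "K \<subseteq> X"
    and fin: "\<And>F. finite F \<Longrightarrow> F \<subseteq> A \<Longrightarrow> \<exists>y\<in>A. y \<in> K \<and> (\<forall>x\<in>F. R x y)"
  shows "\<exists>z\<in>K. \<forall>a b. a \<in> X \<longrightarrow> b \<in> X \<longrightarrow> way_below X le a z \<longrightarrow> way_below X le z b \<longrightarrow>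
            (\<forall>x\<in>A. \<exists>y\<in>A. R x y \<and> way_below X le a y \<and> way_below X le y b)"
proof (rule ccontr)
  assume "\<not> ?thesis"
  then have H: "\<forall>z\<in>K. \<exists>a b. a \<in> X \<and> b \<in> X \<and> way_below X le a z \<and> way_below X le z b \<and>
            (\<exists>x\<in>A. \<forall>y\<in>A. R x y \<longrightarrow> \<not> (way_below X le a y \<and> way_below X le y b))" by blast
  define U where "U = {V. openin (interval_topology X le) V \<and> (\<exists>x\<in>A. \<forall>y\<in>A. R x y \<longrightarrow> y \<notin> V)}"
  have "K \<subseteq> \<Union>U"
  proof
    fix z assume "z \<in> K"
    then obtain a b x where abx: "a \<in> X" "b \<in> X" "way_below X le a z" "way_below X le z b" "x \<in> A"
       "\<forall>y\<in>A. R x y \<longrightarrow> \<not> (way_below X le a y \<and> way_below X le y b)" using H by blast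
    let ?V = "{w\<in>X. way_below X le a w \<and> way_below X le w b}"
    have "openin (interval_topology X le) ?V"
      unfolding interval_topology_def by (rule topology_generated_by_Basis) (use abx in blast)
    then have "?V \<in> U" unfolding U_def using abx by blast
    moreover have "z \<in> ?V" using abx \<open>z \<in> K\<close> KX by blast
    ultimately show "z \<in> \<Union>U" by blast
  qed
  moreover have "\<forall>V\<in>U. openin (interval_topology X le) V" unfolding U_def by blast
  ultimately obtain F where F: "finite F" "F \<subseteq> U" "K \<subseteq> \<Union>F"
    using cp unfolding compactin_def by meson
  have "\<forall>V\<in>F. \<exists>x\<in>A. \<forall>y\<in>A. R x y \<longrightarrow> y \<notin> V" using F(2) unfolding U_def by blast
  then obtain f where f: "\<forall>V\<in>F. f V \<in> A \<and> (\<forall>y\<in>A. R (f V) y \<longrightarrow> y \<notin> V)" by metis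
  obtain y where y: "y \<in> A" "y \<in> K" "\<forall>x\<in>f ` F. R x y" using fin[of "f ` F"] F(1) f by blast
  then obtain V where "V \<in> F" "y \<in> V" using F(3) by blast
  then show False using f y by blast
qed

lemma dir_sup:
  assumes A: "directed_in X le A" and a0: "a0 \<in> A" and b: "b \<in> X" and ub: "\<forall>x\<in>A. le x b"
  shows "\<exists>s. is_sup_in X le A s"
proof -
  have AX: "A \<subseteq> X" using A unfolding directed_in_def by blast
  let ?K = "closed_interval X le a0 b"
  have KX: "?K \<subseteq> X" unfolding closed_interval_def by blast
  have fin: "\<exists>y\<in>A. y \<in> ?K \<and> (\<forall>x\<in>F. le x y)" if fF: "finite F" "F \<subseteq> A" for F
  proof -
    have "\<exists>y\<in>A. \<forall>x\<in>insert a0 F. le x y"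
      apply (rule dir_finite[OF A])
        apply (metis trans)
      using fF a0 by auto
    then obtain y where y: "y \<in> A" "\<forall>x\<in>insert a0 F. le x y" by blast
    then show ?thesis using ub AX unfolding closed_interval_def by blast
  qed
  obtain z where z: "z \<in> ?K" and cl: "\<forall>a b. a \<in> X \<longrightarrow> b \<in> X \<longrightarrow> way_below X le a z \<longrightarrow> way_below X le z b \<longrightarrow>
            (\<forall>x\<in>A. \<exists>y\<in>A. le x y \<and> way_below X le a y \<and> way_below X le y b)"
    using cluster[OF comp[OF _ b] KX fin] a0 AX by blast
  have zX: "z \<in> X" using z KX by blast
  have "is_sup_in X le A z"
    unfolding is_sup_in_def
  proof (intro conjI ballI impI)
    show "z \<in> X" by fact
  next
    fix x assume x: "x \<in> A"
    show "le x z"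
    proof (rule ccontr)
      assume nle: "\<not> le x z"
      have "\<exists>w\<in>way_above_set X le z. \<not> le x w"
        using bic2[OF zX] nle x AX unfolding is_inf_in_def by blast
      then obtain w where w: "w \<in> way_above_set X le z" "\<not> le x w" by blast
      obtain a where a: "a \<in> way_below_set X le z" using down_nonempty[OF zX] by blast
      obtain y where y: "y \<in> A" "le x y" "way_below X le y w"
        using cl a w x unfolding way_below_set_def way_above_set_def by blast
      have "le y w" using wb_le y w AX unfolding way_above_set_def by blast
      then show False using trans[of x y w] y w x AX unfolding way_above_set_def by blast
    qed
  next
    fix u assume u: "u \<in> X" "\<forall>d\<in>A. le d u"
    show "le z u"
    proof (rule ccontr)
      assume nle: "\<not> le z u"
      obtain D where D: "D \<subseteq> way_below_set X le z" "directed_in X le D" "is_sup_in X le D z"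
        using cont[OF zX] by blast
      obtain d where d: "d \<in> D" "\<not> le d u" using D(3) u nle unfolding is_sup_in_def by blast
      obtain w where w: "w \<in> way_above_set X le z" using up_nonempty[OF zX] by blast
      obtain y where y: "y \<in> A" "way_below X le d y"
        using cl d D(1) w a0 unfolding way_below_set_def way_above_set_def by blast
      have dX: "d \<in> X" using d D(1) unfolding way_below_set_def by blast
      have "le d y" using wb_le y dX AX by blast
      then show False using trans[of d y u] dX y u AX d by blast
    qed
  qed
  then show ?thesis by blast
qed

lemma filt_inf:
  assumes B: "filtered_in X le B" and b0: "b0 \<in> B" and a: "a \<in> X" and lb: "\<forall>x\<in>B. le a x"
  shows "\<exists>t. is_inf_in X le B t"
proof -
  have B': "directed_in X (\<lambda>x y. le y x) B" using B unfolding filtered_in_def directed_in_def by blast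
  have BX: "B \<subseteq> X" using B unfolding filtered_in_def by blast
  have b0X: "b0 \<in> X" using b0 BX by blast
  let ?K = "closed_interval X le a b0"
  have KX: "?K \<subseteq> X" unfolding closed_interval_def by blast
  have fin: "\<exists>y\<in>B. y \<in> ?K \<and> (\<forall>x\<in>F. (\<lambda>x y. le y x) x y)" if fF: "finite F" "F \<subseteq> B" for F
  proof -
    have "\<exists>y\<in>B. \<forall>x\<in>insert b0 F. le y x"
      apply (rule dir_finite[OF B'])
        apply (metis trans)
      using fF b0 by auto
    then obtain y where y: "y \<in> B" "\<forall>x\<in>insert b0 F. le y x" by blast
    then show ?thesis using lb BX unfolding closed_interval_def by blast
  qed
  obtain z where z: "z \<in> ?K" and cl: "\<forall>a b. a \<in> X \<longrightarrow> b \<in> X \<longrightarrow> way_below X le a z \<longrightarrow> way_below X le z b \<longrightarrow>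
            (\<forall>x\<in>B. \<exists>y\<in>B. le y x \<and> way_below X le a y \<and> way_below X le y b)"
    using cluster[OF comp[OF a b0X] KX fin] by blast
  have zX: "z \<in> X" using z KX by blast
  have "is_inf_in X le B z"
    unfolding is_inf_in_def
  proof (intro conjI ballI impI)
    show "z \<in> X" by fact
  next
    fix x assume x: "x \<in> B"
    show "le z x"
    proof (rule ccontr)
      assume nle: "\<not> le z x"
      obtain D where D: "D \<subseteq> way_below_set X le z" "directed_in X le D" "is_sup_in X le D z"
        using cont[OF zX] by blast
      obtain d where d: "d \<in> D" "\<not> le d x" using D(3) x BX nle unfolding is_sup_in_def by blast
      obtain w where w: "w \<in> way_above_set X le z" using up_nonempty[OF zX] by blast
      obtain y where y: "y \<in> B" "le y x" "way_below X le d y"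
        using cl d D(1) w x unfolding way_below_set_def way_above_set_def by blast
      have dX: "d \<in> X" using d D(1) unfolding way_below_set_def by blast
      have "le d y" using wb_le y dX BX by blast
      then show False using trans[of d y x] dX y x BX d by blast
    qed
  next
    fix l assume l: "l \<in> X" "\<forall>d\<in>B. le l d"
    show "le l z"
    proof (rule ccontr)
      assume nle: "\<not> le l z"
      have "\<exists>w\<in>way_above_set X le z. \<not> le l w"
        using bic2[OF zX] nle l unfolding is_inf_in_def by blast
      then obtain w where w: "w \<in> way_above_set X le z" "\<not> le l w" by blast
      obtain a' where a': "a' \<in> way_below_set X le z" using down_nonempty[OF zX] by blast
      obtain y where y: "y \<in> B" "way_below X le y w"
        using cl a' w b0 unfolding way_below_set_def way_above_set_def by blast
      have wX: "w \<in> X" using w unfolding way_above_set_def by blast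
      have "le y w" using wb_le y wX BX by blast
      then show False using trans[of l y w] l y w wX BX by blast
    qed
  qed
  then show ?thesis by blast
qed

abbreviation "I \<equiv> formal_intervals X le"
abbreviation "fle \<equiv> formal_le le"

lemma I_mem: "p \<in> I \<longleftrightarrow> fst p \<in> X \<and> snd p \<in> X \<and> le (fst p) (snd p)"
  unfolding formal_intervals_def by (cases p) auto

lemma dir_pairs:
  assumes D: "directed_in I fle D"
  shows "\<exists>s t. is_sup_in X le (fst ` D) s \<and> is_inf_in X le (snd ` D) t \<and> le s t \<and> is_sup_in I fle D (s, t)"
proof -
  have DI: "D \<subseteq> I" using D unfolding directed_in_def by blast
  obtain p0 where p0: "p0 \<in> D" using D unfolding directed_in_def by blast
  have ub: "\<exists>r\<in>D. fle p r \<and> fle q r" if "p \<in> D" "q \<in> D" for p q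
    using D that unfolding directed_in_def by blast
  have key: "le (fst p) (snd q)" if pq: "p \<in> D" "q \<in> D" for p q
  proof -
    obtain r where r: "r \<in> D" "fle p r" "fle q r" using ub pq by blast
    have m: "p \<in> I" "q \<in> I" "r \<in> I" using r pq DI by auto
    have "le (fst p) (fst r)" "le (snd r) (snd q)" using r unfolding formal_le_def by auto
    moreover have "le (fst r) (snd r)" using m I_mem by blast
    ultimately show ?thesis using trans m I_mem by meson
  qed
  have A: "directed_in X le (fst ` D)"
    unfolding directed_in_def
  proof (intro conjI ballI)
    show "fst ` D \<subseteq> X" using DI I_mem by blast
    show "fst ` D \<noteq> {}" using p0 by blast
    fix x y assume "x \<in> fst ` D" "y \<in> fst ` D"
    then obtain p q where "p \<in> D" "q \<in> D" "x = fst p" "y = fst q" by blast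
    then show "\<exists>z\<in>fst ` D. le x z \<and> le y z" using ub unfolding formal_le_def by blast
  qed
  have B: "filtered_in X le (snd ` D)"
    unfolding filtered_in_def
  proof (intro conjI ballI)
    show "snd ` D \<subseteq> X" using DI I_mem by blast
    show "snd ` D \<noteq> {}" using p0 by blast
    fix x y assume "x \<in> snd ` D" "y \<in> snd ` D"
    then obtain p q where "p \<in> D" "q \<in> D" "x = snd p" "y = snd q" by blast
    then show "\<exists>z\<in>snd ` D. le z x \<and> le z y" using ub unfolding formal_le_def by blast
  qed
  have p0I: "p0 \<in> I" using p0 DI by blast
  obtain s where s: "is_sup_in X le (fst ` D) s"
    using dir_sup[OF A, of "fst p0" "snd p0"] p0 p0I key I_mem by blast
  obtain t where t: "is_inf_in X le (snd ` D) t"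
    using filt_inf[OF B, of "snd p0" "fst p0"] p0 p0I key I_mem by blast
  have sX: "s \<in> X" "t \<in> X" using s t unfolding is_sup_in_def is_inf_in_def by auto
  have "le s y" if "y \<in> snd ` D" for y
    using s that key DI I_mem unfolding is_sup_in_def by blast
  then have st: "le s t" using t sX unfolding is_inf_in_def by blast
  have "is_sup_in I fle D (s, t)"
    unfolding is_sup_in_def
  proof (intro conjI ballI impI)
    show "(s, t) \<in> I" using sX st I_mem by simp
  next
    fix d assume "d \<in> D" then show "fle d (s, t)"
      using s t unfolding is_sup_in_def is_inf_in_def formal_le_def by auto
  next
    fix u assume u: "u \<in> I" "\<forall>d\<in>D. fle d u"
    have "le s (fst u)" using s u I_mem unfolding is_sup_in_def formal_le_def by blast
    moreover have "le (snd u) t" using t u I_mem unfolding is_inf_in_def formal_le_def by blast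
    ultimately show "fle (s, t) u" unfolding formal_le_def by simp
  qed
  then show ?thesis using s t st by blast
qed

lemma wb_I:
  assumes X4: "a \<in> X" "b \<in> X" "c \<in> X" "d \<in> X" and ac: "way_below X le a c" and db: "way_below X le d b"
  shows "way_below I fle (a, b) (c, d)"
  unfolding way_below_def
proof (intro allI impI)
  fix D p assume h: "directed_in I fle D \<and> is_sup_in I fle D p \<and> fle (c, d) p"
  have hD: "directed_in I fle D" and hp: "is_sup_in I fle D p" and hcd: "fle (c, d) p" using h by auto
  obtain s t where st: "is_sup_in X le (fst ` D) s" "is_inf_in X le (snd ` D) t" "le s t"
    "is_sup_in I fle D (s, t)" using dir_pairs[OF hD] by blast
  have DI: "D \<subseteq> I" using hD unfolding directed_in_def by blast
  have pI: "p \<in> I" "(s,t) \<in> I" using hp st(4) unfolding is_sup_in_def by auto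
  have sX: "s \<in> X" "t \<in> X" using pI(2) I_mem by auto
  have pX: "fst p \<in> X" "snd p \<in> X" using pI(1) I_mem by auto
  have "fle p (s, t)" using hp st(4) pI unfolding is_sup_in_def by blast
  then have ps: "le (fst p) s" "le t (snd p)" unfolding formal_le_def by auto
  have cp: "le c (fst p)" "le (snd p) d" using hcd unfolding formal_le_def by auto
  have cs: "le c s" using trans[OF X4(3) pX(1) sX(1) cp(1) ps(1)] .
  have td: "le t d" using trans[OF sX(2) pX(2) X4(4) ps(2) cp(2)] .
  have as: "way_below X le a s" using wb_mono[OF X4(3) sX(1) ac cs] .
  have Ad: "directed_in X le (fst ` D)"
  proof -
    have "\<exists>z\<in>fst ` D. le x z \<and> le y z" if xy: "x \<in> fst ` D" "y \<in> fst ` D" for x y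
    proof -
      obtain p1 p2 where "p1 \<in> D" "p2 \<in> D" "x = fst p1" "y = fst p2" using xy by blast
      then obtain r where "r \<in> D" "fle p1 r" "fle p2 r" "x = fst p1" "y = fst p2"
        using hD unfolding directed_in_def by blast
      then show ?thesis unfolding formal_le_def by blast
    qed
    moreover have "fst ` D \<subseteq> X" using DI I_mem by blast
    moreover have "fst ` D \<noteq> {}" using hD unfolding directed_in_def by blast
    ultimately show ?thesis unfolding directed_in_def by blast
  qed
  have Bf: "filtered_in X le (snd ` D)"
  proof -
    have "\<exists>z\<in>snd ` D. le z x \<and> le z y" if xy: "x \<in> snd ` D" "y \<in> snd ` D" for x y
    proof -
      obtain p1 p2 where "p1 \<in> D" "p2 \<in> D" "x = snd p1" "y = snd p2" using xy by blast
      then obtain r where "r \<in> D" "fle p1 r" "fle p2 r" "x = snd p1" "y = snd p2"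
        using hD unfolding directed_in_def by blast
      then show ?thesis unfolding formal_le_def by blast
    qed
    moreover have "snd ` D \<subseteq> X" using DI I_mem by blast
    moreover have "snd ` D \<noteq> {}" using hD unfolding directed_in_def by blast
    ultimately show ?thesis unfolding filtered_in_def by blast
  qed
  have "\<exists>x\<in>fst ` D. le a x"
    using as[unfolded way_below_def, rule_format, OF conjI[OF Ad conjI[OF st(1) refl[OF sX(1)]]]] .
  then obtain x where x: "x \<in> fst ` D" "le a x" by blast
  obtain y where y: "y \<in> snd ` D" "le y b" using bic1[OF X4(4,2) db Bf st(2) td] by blast
  obtain p1 p2 where pp: "p1 \<in> D" "p2 \<in> D" "x = fst p1" "y = snd p2" using x y by blast
  obtain r where r: "r \<in> D" "fle p1 r" "fle p2 r" using hD pp unfolding directed_in_def by blast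
  have m: "p1 \<in> I" "p2 \<in> I" "r \<in> I" using pp r DI by auto
  have r1: "le (fst p1) (fst r)" "le (snd r) (snd p2)" using r unfolding formal_le_def by auto
  have mX: "fst p1 \<in> X" "fst r \<in> X" "snd p2 \<in> X" "snd r \<in> X" using m I_mem by auto
  have "le a (fst r)" using trans[OF X4(1) mX(1,2)] x(2) r1(1) pp(3) by simp
  moreover have "le (snd r) b" using trans[OF mX(4,3) X4(2)] y(2) r1(2) pp(4) by simp
  ultimately show "\<exists>d\<in>D. fle (a, b) d" using r unfolding formal_le_def by auto
qed

lemma I_po: "partial_order_on' I fle"
  unfolding partial_order_on'_def
proof (intro conjI ballI impI)
  fix x assume "x \<in> I" then show "fle x x" unfolding formal_le_def using I_mem refl by auto
next
  fix x y assume xy: "x \<in> I" "y \<in> I" and h: "fle x y \<and> fle y x"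
  have "fst x = fst y" using antisym xy I_mem h unfolding formal_le_def by auto
  moreover have "snd x = snd y" using antisym xy I_mem h unfolding formal_le_def by auto
  ultimately show "x = y" by (rule prod_eqI)
next
  fix x y z assume xyz: "x \<in> I" "y \<in> I" "z \<in> I" and h: "fle x y \<and> fle y z"
  have X: "fst x \<in> X" "fst y \<in> X" "fst z \<in> X" "snd x \<in> X" "snd y \<in> X" "snd z \<in> X"
    using xyz I_mem by auto
  have "le (fst x) (fst z)" using trans[OF X(1,2,3)] h unfolding formal_le_def by auto
  moreover have "le (snd z) (snd x)" using trans[OF X(6,5,4)] h unfolding formal_le_def by auto
  ultimately show "fle x z" unfolding formal_le_def by simp
qed

lemma I_dcpo: "directed_in I fle D \<Longrightarrow> \<exists>s. is_sup_in I fle D s"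
  using dir_pairs by blast

lemma I_cont: "continuous_poset I fle"
  unfolding continuous_poset_def
proof (intro conjI)
  show "partial_order_on' I fle" by (rule I_po)
  show "\<exists>B\<subseteq>I. \<forall>x\<in>I. \<exists>D. D \<subseteq> B \<inter> way_below_set I fle x \<and> directed_in I fle D \<and> is_sup_in I fle D x"
  proof (rule exI[of _ I], intro conjI ballI)
    fix x assume xI: "x \<in> I"
    obtain c d where x: "x = (c, d)" by (cases x)
    have cd: "c \<in> X" "d \<in> X" "le c d" using xI x I_mem by auto
    define D where "D = way_below_set X le c \<times> way_above_set X le d"
    have Dm: "p \<in> D \<longleftrightarrow> fst p \<in> X \<and> snd p \<in> X \<and> way_below X le (fst p) c \<and> way_below X le d (snd p)" for p
      unfolding D_def way_below_set_def way_above_set_def by (cases p) auto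
    have DI: "D \<subseteq> I"
    proof
      fix p assume "p \<in> D"
      then have pX: "fst p \<in> X" "snd p \<in> X" "le (fst p) c" "le d (snd p)" using Dm wb_le cd by auto
      have "le (fst p) d" using trans[OF pX(1) cd(1,2) pX(3) cd(3)] .
      then have "le (fst p) (snd p)" using trans[OF pX(1) cd(2) pX(2) _ pX(4)] by simp
      then show "p \<in> I" using I_mem pX by simp
    qed
    have Dwb: "D \<subseteq> way_below_set I fle x"
    proof
      fix p assume pD: "p \<in> D"
      then have "way_below I fle (fst p, snd p) (c, d)" using wb_I cd Dm by blast
      then show "p \<in> way_below_set I fle x" using pD DI unfolding way_below_set_def x by auto
    qed
    have fa: "filtered_in X le (way_above_set X le d)" "is_inf_in X le (way_above_set X le d) d"
      using bic2 cd by auto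
    have dd: "directed_in X le (way_below_set X le c)" using down_directed cd by blast
    have Ddir: "directed_in I fle D"
      unfolding directed_in_def
    proof (intro conjI ballI)
      show "D \<subseteq> I" by fact
      show "D \<noteq> {}" using fa dd unfolding D_def filtered_in_def directed_in_def by blast
      fix p q assume pq: "p \<in> D" "q \<in> D"
      obtain a where a: "a \<in> way_below_set X le c" "le (fst p) a" "le (fst q) a"
        using dd pq unfolding D_def directed_in_def by fastforce
      obtain b where b: "b \<in> way_above_set X le d" "le b (snd p)" "le b (snd q)"
        using fa pq unfolding D_def filtered_in_def by fastforce
      show "\<exists>z\<in>D. fle p z \<and> fle q z"
        using a b unfolding D_def formal_le_def by (intro bexI[of _ "(a,b)"]) auto
    qed
    obtain Dc where Dc: "Dc \<subseteq> way_below_set X le c" "directed_in X le Dc" "is_sup_in X le Dc c"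
      using cont cd by blast
    obtain a0 where a0: "a0 \<in> way_below_set X le c" using down_nonempty cd by blast
    obtain b0 where b0: "b0 \<in> way_above_set X le d" using up_nonempty cd by blast
    have Dsup: "is_sup_in I fle D x"
      unfolding is_sup_in_def
    proof (intro conjI ballI impI)
      show "x \<in> I" by fact
    next
      fix p assume "p \<in> D"
      then show "fle p x" using Dm wb_le cd unfolding x formal_le_def by auto
    next
      fix u assume u: "u \<in> I" "\<forall>p\<in>D. fle p u"
      have "le a (fst u)" if "a \<in> Dc" for a
        using u(2)[rule_format, of "(a, b0)"] that Dc(1) b0 unfolding D_def formal_le_def by auto
      then have c1: "le c (fst u)" using Dc(3) u(1) I_mem unfolding is_sup_in_def by blast
      have "le (snd u) b" if "b \<in> way_above_set X le d" for b
        using u(2)[rule_format, of "(a0, b)"] that a0 unfolding D_def formal_le_def by auto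
      then have "le (snd u) d" using fa(2) u(1) I_mem unfolding is_inf_in_def by blast
      then show "fle x u" using c1 unfolding x formal_le_def by simp
    qed
    show "\<exists>D. D \<subseteq> I \<inter> way_below_set I fle x \<and> directed_in I fle D \<and> is_sup_in I fle D x"
      using DI Dwb Ddir Dsup by blast
  qed simp
qed

lemma sub_iff:
  assumes pI: "p \<in> I" and qI: "q \<in> I"
  shows "closed_interval X le (fst q) (snd q) \<subseteq> closed_interval X le (fst p) (snd p) \<longleftrightarrow> fle p q"
proof
  assume h: "closed_interval X le (fst q) (snd q) \<subseteq> closed_interval X le (fst p) (snd p)"
  have qX: "fst q \<in> X" "snd q \<in> X" "le (fst q) (snd q)" using qI I_mem by auto
  have "fst q \<in> closed_interval X le (fst q) (snd q)" "snd q \<in> closed_interval X le (fst q) (snd q)"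
    using qX refl unfolding closed_interval_def by auto
  then show "fle p q" using h unfolding closed_interval_def formal_le_def by auto
next
  assume h: "fle p q"
  have X: "fst p \<in> X" "snd p \<in> X" "fst q \<in> X" "snd q \<in> X" using pI qI I_mem by auto
  show "closed_interval X le (fst q) (snd q) \<subseteq> closed_interval X le (fst p) (snd p)"
  proof
    fix z assume "z \<in> closed_interval X le (fst q) (snd q)"
    then have z: "z \<in> X" "le (fst q) z" "le z (snd q)" unfolding closed_interval_def by auto
    have "le (fst p) z" using trans[OF X(1) X(3) z(1)] h z unfolding formal_le_def by simp
    moreover have "le z (snd p)" using trans[OF z(1) X(4) X(2)] h z unfolding formal_le_def by simp
    ultimately show "z \<in> closed_interval X le (fst p) (snd p)" using z unfolding closed_interval_def by simp
  qed
qed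

lemma iso: "order_isomorphic I fle (interval_domain X le) (\<lambda>A B. B \<subseteq> A)"
  unfolding order_isomorphic_def
proof (rule exI[of _ "\<lambda>p. closed_interval X le (fst p) (snd p)"], intro conjI ballI)
  fix p q assume "p \<in> I" "q \<in> I"
  then show "fle p q \<longleftrightarrow> closed_interval X le (fst q) (snd q) \<subseteq> closed_interval X le (fst p) (snd p)"
    using sub_iff by blast
next
  show "bij_betw (\<lambda>p. closed_interval X le (fst p) (snd p)) I (interval_domain X le)"
    unfolding bij_betw_def
  proof
    show "inj_on (\<lambda>p. closed_interval X le (fst p) (snd p)) I"
    proof (rule inj_onI)
      fix p q assume pq: "p \<in> I" "q \<in> I" and e: "closed_interval X le (fst p) (snd p) = closed_interval X le (fst q) (snd q)"
      have h: "fle p q" "fle q p" using sub_iff[OF pq(1) pq(2)] sub_iff[OF pq(2) pq(1)] e by auto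
      have X: "fst p \<in> X" "snd p \<in> X" "fst q \<in> X" "snd q \<in> X" using pq I_mem by auto
      have "fst p = fst q" using antisym[OF X(1,3)] h unfolding formal_le_def by simp
      moreover have "snd p = snd q" using antisym[OF X(2,4)] h unfolding formal_le_def by simp
      ultimately show "p = q" by (rule prod_eqI)
    qed
    show "(\<lambda>p. closed_interval X le (fst p) (snd p)) ` I = interval_domain X le"
      unfolding interval_domain_def formal_intervals_def by force
  qed
qed

end

theorem mainTheorem4:
  fixes X :: "'a set" and le :: "'a \<Rightarrow> 'a \<Rightarrow> bool"
  assumes "globally_hyperbolic X le"
  shows "domain_poset (formal_intervals X le) (formal_le le)
       \<and> order_isomorphic (formal_intervals X le) (formal_le le)
           (interval_domain X le) (\<lambda>A B. B \<subseteq> A)"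
  using I_cont[OF assms] I_dcpo[OF assms] iso[OF assms] unfolding domain_poset_def by blast

end
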